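(* For every integer $s$ with $0\le s\le q-2$, the code $B_0^{ext}(s)$ has parameters $[q^2+1,(s+1)^2,q^2+1-s(q+1)]$ over $\mathbf{F}_q$.
   Context: Let $0\le s\le q-1$. $B^{ext}(s)\subseteq\mathbf{F}_{q^2}^{q^2+1}$ is the $\mathbf{F}_{q^2}$-linear code spanned by the vectors obtained by evaluating the binary forms $x^{i+qj}y^{(s-i)+q(s-j)}$, $0\le i,j\le s$, at all points of $\mathbf{P}^1(\mathbf{F}_{q^2})$ (in a fixed order, each point represented with first nonzero coordinate equal to $1$). $B_0^{ext}(s)$ is the subfield subcode $B^{ext}(s)\cap\mathbf{F}_q^{q^2+1}$. Parameters $[n,k,d]$ denote length, dimension over $\mathbf{F}_q$, and minimum Hamming distance. *)

theory Defs
  imports Main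
begin

text \<open>The ambient field 'a is F_{q^2} (a finite field with q^2 elements);
  F_q is its unique subfield of order q, i.e. the set of roots of x^q - x.\<close>

definition Fq :: "nat \<Rightarrow> 'a::{field,finite} set" where
  "Fq q = {x. x ^ q = x}"

text \<open>Points of P^1(F_{q^2}), each represented with first nonzero coordinate 1.\<close>

definition P1 :: "('a::{field,finite} \<times> 'a) set" where
  "P1 = {(1, a) | a. True} \<union> {(0, 1)}"

text \<open>Words of length q^2+1 are functions on the point set (zero outside P1).\<close>

definition ev_mon :: "nat \<Rightarrow> nat \<Rightarrow> nat \<Rightarrow> nat \<Rightarrow> ('a::{field,finite} \<times> 'a \<Rightarrow> 'a)" where
  "ev_mon q s i j = (\<lambda>p. if p \<in> P1
      then fst p ^ (i + q * j) * snd p ^ ((s - i) + q * (s - j)) else 0)"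

definition B_ext :: "nat \<Rightarrow> nat \<Rightarrow> ('a::{field,finite} \<times> 'a \<Rightarrow> 'a) set" where
  "B_ext q s = {(\<lambda>p. \<Sum>i\<le>s. \<Sum>j\<le>s. c i j * ev_mon q s i j p) | c. True}"

definition B0_ext :: "nat \<Rightarrow> nat \<Rightarrow> ('a::{field,finite} \<times> 'a \<Rightarrow> 'a) set" where
  "B0_ext q s = B_ext q s \<inter> {w. \<forall>p\<in>P1. w p \<in> Fq q}"

definition Fq_span :: "nat \<Rightarrow> ('a::{field,finite} \<times> 'a \<Rightarrow> 'a) list \<Rightarrow> ('a \<times> 'a \<Rightarrow> 'a) set" where
  "Fq_span q vs = {(\<lambda>p. \<Sum>i<length vs. c i * (vs ! i) p) | c. \<forall>i. c i \<in> Fq q}"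

definition Fq_indep :: "nat \<Rightarrow> ('a::{field,finite} \<times> 'a \<Rightarrow> 'a) list \<Rightarrow> bool" where
  "Fq_indep q vs = (\<forall>c. (\<forall>i. c i \<in> Fq q) \<and> (\<forall>p. (\<Sum>i<length vs. c i * (vs ! i) p) = 0)
      \<longrightarrow> (\<forall>i<length vs. c i = 0))"

definition has_Fq_dim :: "nat \<Rightarrow> ('a::{field,finite} \<times> 'a \<Rightarrow> 'a) set \<Rightarrow> nat \<Rightarrow> bool" where
  "has_Fq_dim q C k = (\<exists>vs. length vs = k \<and> set vs \<subseteq> C \<and> Fq_indep q vs \<and> Fq_span q vs = C)"

definition hdist :: "('a::{field,finite} \<times> 'a \<Rightarrow> 'a) \<Rightarrow> ('a \<times> 'a \<Rightarrow> 'a) \<Rightarrow> nat" where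
  "hdist x y = card {p \<in> P1. x p \<noteq> y p}"

definition min_dist :: "('a::{field,finite} \<times> 'a \<Rightarrow> 'a) set \<Rightarrow> nat" where
  "min_dist C = Min {hdist x y | x y. x \<in> C \<and> y \<in> C \<and> x \<noteq> y}"

end

theory Submission
  imports Defs "HOL-Computational_Algebra.Computational_Algebra"
begin

lemma fin_pow_card:
  fixes x :: "'a::{field,finite}"
  shows "x ^ card (UNIV :: 'a set) = x"
proof (cases "x = 0")
  case False
  have "x * (\<Prod>y\<in>UNIV-{0}. x * y) = x * x ^ (card (UNIV :: 'a set) - 1) * \<Prod>(UNIV-{0})"
    by (simp add: prod.distrib mult_ac)
  also have "x * x ^ (card (UNIV :: 'a set) - 1) = x ^ Suc (card (UNIV :: 'a set) - 1)"
    by (subst power_Suc) auto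
  also have "Suc (card (UNIV :: 'a set) - 1) = card (UNIV :: 'a set)"
    using finite_UNIV_card_ge_0[where ?'a = 'a] by simp
  also have "(\<Prod>y\<in>UNIV-{0}. x * y) = (\<Prod>y\<in>UNIV-{0}. y)"
    by (rule prod.reindex_bij_witness[of _ "\<lambda>y. y / x" "\<lambda>y. x * y"]) (use False in auto)
  finally show ?thesis
    by simp
qed (use finite_UNIV_card_ge_0[where ?'a = 'a] in auto)

lemma char_prime: "prime CHAR('a::{field,finite})"
  by (rule prime_CHAR_semidom) (rule finite_imp_CHAR_pos, simp)

definition addsub :: "'a::ring_1 set \<Rightarrow> bool" where
  "addsub S \<longleftrightarrow> 0 \<in> S \<and> (\<forall>x\<in>S. \<forall>y\<in>S. x + y \<in> S) \<and> (\<forall>x\<in>S. -x \<in> S)"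

lemma addsub_ofnat: "addsub S \<Longrightarrow> x \<in> S \<Longrightarrow> of_nat k * x \<in> S"
  by (induction k) (auto simp: addsub_def distrib_right)

lemma of_nat_mod_CHAR': "(of_nat (n mod CHAR('a::ring_1)) :: 'a) = of_nat n"
proof -
  have "(of_nat n :: 'a) = of_nat ((n div CHAR('a)) * CHAR('a) + n mod CHAR('a))" by simp
  also have "\<dots> = of_nat (n mod CHAR('a))" by (simp only: of_nat_add of_nat_mult of_nat_CHAR) simp
  finally show ?thesis by simp
qed

lemma card_ext:
  fixes v :: "'a::{field,finite}"
  assumes S: "addsub S" and v: "v \<notin> S"
  defines "S' \<equiv> (\<lambda>(s,k). s + of_nat k * v) ` (S \<times> {..<CHAR('a)})"
  shows "addsub S'" "card S' = card S * CHAR('a)" "S \<subset> S'"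
proof -
  let ?p = "CHAR('a)"
  have pp: "prime ?p" by (rule char_prime)
  hence p2: "?p \<ge> 2" by (simp add: prime_ge_2_nat)
  have mem: "s + of_nat k * v \<in> S'" if "s \<in> S" for s k
  proof -
    have "s + of_nat k * v = s + of_nat (k mod ?p) * v" by (simp add: of_nat_mod_CHAR')
    moreover have "k mod ?p < ?p" using p2 by simp
    ultimately show ?thesis unfolding S'_def using that by force
  qed
  show "addsub S'"
    unfolding addsub_def
  proof (intro conjI ballI)
    show "0 \<in> S'" using mem[of 0 0] S by (simp add: addsub_def)
  next
    fix x y assume "x \<in> S'" "y \<in> S'"
    then obtain s1 k1 s2 k2 where "s1 \<in> S" "s2 \<in> S" "x = s1 + of_nat k1 * v" "y = s2 + of_nat k2 * v"
      unfolding S'_def by auto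
    hence "x + y = (s1 + s2) + of_nat (k1 + k2) * v" by (simp add: algebra_simps)
    moreover have "s1 + s2 \<in> S" using \<open>s1 \<in> S\<close> \<open>s2 \<in> S\<close> S by (simp add: addsub_def)
    ultimately show "x + y \<in> S'" using mem by metis
  next
    fix x assume "x \<in> S'"
    then obtain s k where sk: "s \<in> S" "k < ?p" "x = s + of_nat k * v"
      unfolding S'_def by auto
    have "of_nat (?p - k) = (of_nat ?p - of_nat k :: 'a)" using sk(2) by (simp add: of_nat_diff)
    hence "-x = (-s) + of_nat (?p - k) * v" using sk by (simp add: algebra_simps)
    moreover have "-s \<in> S" using sk S by (simp add: addsub_def)
    ultimately show "-x \<in> S'" using mem by metis
  qed
  have inj: "inj_on (\<lambda>(s,k). s + of_nat k * v) (S \<times> {..<?p})"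
  proof -
    have key: "s1 = s2 \<and> k1 = k2" if "s1 \<in> S" "s2 \<in> S" "k2 \<le> k1" "k1 < ?p"
        "s1 + of_nat k1 * v = s2 + of_nat k2 * v" for s1 s2 k1 k2
    proof (cases "k1 = k2")
      case True thus ?thesis using that by simp
    next
      case False
      define d where "d = k1 - k2"
      have d: "0 < d" "d < ?p" using that False by (auto simp: d_def)
      have "of_nat d * v = s2 - s1" using that
        by (simp add: d_def of_nat_diff algebra_simps)
      also have "\<dots> \<in> S" using that S unfolding addsub_def by (metis diff_conv_add_uminus)
      finally have dS: "of_nat d * v \<in> S" .
      have dnz: "(of_nat d :: 'a) \<noteq> 0" using d by (auto simp: of_nat_eq_0_iff_char_dvd dest: dvd_imp_le)
      define N where "N = card (UNIV :: 'a set)"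
      have N2: "N \<ge> 2" unfolding N_def using card_mono[of UNIV "{0::'a,1}"] by simp
      have "(of_nat d :: 'a) ^ N = of_nat d" unfolding N_def by (rule fin_pow_card)
      moreover have "(of_nat d :: 'a) ^ (N - 2) * of_nat d * of_nat d = (of_nat d) ^ ((N - 2) + 2)"
        by (simp only: power_add power2_eq_square mult.assoc)
      moreover have "(N - 2) + 2 = N" using N2 by simp
      ultimately have "(of_nat d :: 'a) ^ (N - 2) * of_nat d * of_nat d = 1 * of_nat d"
        by (simp only: mult_1_left)
      hence one: "(of_nat (d ^ (N - 2)) :: 'a) * of_nat d = 1" by (subst of_nat_power, rule iffD1[OF mult_right_cancel[OF dnz]])
      have "v = of_nat (d ^ (N - 2)) * (of_nat d * v)"
        by (simp only: mult.assoc[symmetric] one mult_1_left)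
      also have "\<dots> \<in> S" using addsub_ofnat[OF S dS] by blast
      finally show ?thesis using v by simp
    qed
    show ?thesis unfolding inj_on_def
      by (clarsimp, metis key linorder_le_cases)
  qed
  show "card S' = card S * ?p"
    unfolding S'_def by (subst card_image[OF inj]) (simp add: card_cartesian_product)
  show "S \<subset> S'"
  proof
    show "S \<subseteq> S'" using mem[of _ 0] by auto
    show "S \<noteq> S'" using mem[of 0 1] S v by (auto simp: addsub_def)
  qed
qed

lemma card_char_power_aux:
  fixes S :: "'a::{field,finite} set"
  shows "addsub S \<Longrightarrow> \<exists>n. card (UNIV :: 'a set) = card S * CHAR('a) ^ n"
proof (induction "card (UNIV - S)" arbitrary: S rule: less_induct)
  case (less S)
  show ?case
  proof (cases "S = UNIV")
    case True thus ?thesis by (intro exI[of _ 0]) simp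
  next
    case False
    then obtain v where v: "v \<notin> S" by auto
    define S' where "S' = (\<lambda>(s,k). s + of_nat k * v) ` (S \<times> {..<CHAR('a)})"
    note e = card_ext[OF less.prems v, folded S'_def]
    have "card (UNIV - S') < card (UNIV - S)"
      using e(3) by (intro psubset_card_mono) auto
    then obtain n where "card (UNIV :: 'a set) = card S' * CHAR('a) ^ n"
      using less e(1) by blast
    thus ?thesis using e(2) by (intro exI[of _ "Suc n"]) (simp add: mult_ac)
  qed
qed

lemma card_char_power: "\<exists>n. card (UNIV :: 'a::{field,finite} set) = CHAR('a) ^ n"
proof -
  have "addsub {0::'a}" by (simp add: addsub_def)
  from card_char_power_aux[OF this] show ?thesis by simp
qed

lemma q_char_power:
  assumes cq: "card (UNIV :: 'a::{field,finite} set) = q ^ 2"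
  shows "\<exists>m. q = CHAR('a) ^ m"
proof -
  obtain n where n: "card (UNIV :: 'a set) = CHAR('a) ^ n" using card_char_power by blast
  have "q dvd CHAR('a) ^ n" using cq n by (metis dvd_triv_left power2_eq_square)
  thus ?thesis using divides_primepow_nat[OF char_prime] by blast
qed

lemma frob_add:
  assumes cq: "card (UNIV :: 'a::{field,finite} set) = q ^ 2"
  shows "(x + y :: 'a) ^ q = x ^ q + y ^ q"
  using q_char_power[OF cq] freshmans_dream'[OF char_prime] by blast

lemma frob_sum:
  assumes cq: "card (UNIV :: 'a::{field,finite} set) = q ^ 2"
  shows "(sum (f :: 'b \<Rightarrow> 'a) A) ^ q = sum (\<lambda>i. f i ^ q) A"
  using q_char_power[OF cq] freshmans_dream_sum'[OF char_prime] by blast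


context
  fixes q :: nat
  assumes cq: "card (UNIV :: 'a::{field,finite} set) = q ^ 2"
begin

lemma q_ge2: "q \<ge> 2"
proof -
  have "card {0::'a, 1} \<le> card (UNIV :: 'a set)" by (rule card_mono) auto
  hence "2 \<le> q^2" using cq by simp
  thus ?thesis by (metis One_nat_def less_2_cases_iff not_le one_power2 power_zero_numeral zero_less_numeral le_less_trans not_less_iff_gr_or_eq)
qed

lemma pow_q2: "(x::'a) ^ (q^2) = x"
  using fin_pow_card[of x] cq by simp

lemma pow_qq: "((x::'a) ^ q) ^ q = x"
  using pow_q2[of x] by (simp add: power_mult[symmetric] power2_eq_square)

lemma frob_neg: "(- (x::'a)) ^ q = - (x ^ q)"
proof -
  have "x ^ q + (-x) ^ q = (x + -x) ^ q" using frob_add[OF cq] by metis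
  also have "\<dots> = 0" using q_ge2 by simp
  finally show ?thesis by (simp add: eq_neg_iff_add_eq_0 add.commute)
qed

lemma frob_diff: "((x::'a) - y) ^ q = x ^ q - y ^ q"
  using frob_add[OF cq, of x "-y"] frob_neg[of y] by simp

lemma Fq_0: "(0::'a) \<in> Fq q" using q_ge2 by (simp add: Fq_def)
lemma Fq_1: "(1::'a) \<in> Fq q" by (simp add: Fq_def)
lemma Fq_add: "x \<in> Fq q \<Longrightarrow> y \<in> Fq q \<Longrightarrow> (x::'a) + y \<in> Fq q"
  by (simp add: Fq_def frob_add[OF cq])
lemma Fq_neg: "x \<in> Fq q \<Longrightarrow> - (x::'a) \<in> Fq q"
  by (simp add: Fq_def frob_neg)
lemma Fq_diff: "x \<in> Fq q \<Longrightarrow> y \<in> Fq q \<Longrightarrow> (x::'a) - y \<in> Fq q"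
  by (simp add: Fq_def frob_diff)
lemma Fq_mult: "x \<in> Fq q \<Longrightarrow> y \<in> Fq q \<Longrightarrow> (x::'a) * y \<in> Fq q"
  by (simp add: Fq_def power_mult_distrib)
lemma Fq_div: "x \<in> Fq q \<Longrightarrow> y \<in> Fq q \<Longrightarrow> (x::'a) / y \<in> Fq q"
  by (simp add: Fq_def power_divide)
lemma Fq_sum: "(\<And>i. i \<in> A \<Longrightarrow> f i \<in> Fq q) \<Longrightarrow> (\<Sum>i\<in>A. f i :: 'a) \<in> Fq q"
  by (induction A rule: infinite_finite_induct) (auto simp: Fq_0 Fq_add)
lemma Fq_prod: "(\<And>i. i \<in> A \<Longrightarrow> f i \<in> Fq q) \<Longrightarrow> (\<Prod>i\<in>A. f i :: 'a) \<in> Fq q"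
  by (induction A rule: infinite_finite_induct) (auto simp: Fq_1 Fq_mult)

lemma norm_Fq: "(a::'a) ^ (q+1) \<in> Fq q"
proof -
  have "(a ^ (q+1)) ^ q = (a ^ q) ^ q * a ^ q" by (simp add: power_mult_distrib)
  also have "\<dots> = a ^ (q+1)" by (simp add: pow_qq mult.commute)
  finally show ?thesis by (simp add: Fq_def)
qed

lemma card_Fq_le: "card (Fq q :: 'a set) \<le> q"
proof -
  define P :: "'a poly" where "P = Polynomial.monom 1 q - [:0,1:]"
  have dP: "degree P = q" using q_ge2 unfolding P_def
    by (simp only: diff_conv_add_uminus, subst degree_add_eq_left) (auto simp: degree_monom_eq)
  hence "P \<noteq> 0" using q_ge2 by auto
  have "Fq q = {x. poly P x = 0}" by (auto simp: P_def Fq_def poly_monom)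
  thus ?thesis using card_poly_roots_bound[OF \<open>P \<noteq> 0\<close>] dP by simp
qed

lemma fiber_le: "card {a::'a. a ^ (q+1) = r} \<le> q + 1"
proof -
  define P :: "'a poly" where "P = Polynomial.monom 1 (q+1) - [:r:]"
  have dP: "degree P = q + 1" unfolding P_def
    by (simp only: diff_conv_add_uminus, subst degree_add_eq_left) (auto simp: degree_monom_eq)
  hence "P \<noteq> 0" by auto
  have "{a. a ^ (q+1) = r} = {x. poly P x = 0}" by (auto simp: P_def poly_monom)
  thus ?thesis using card_poly_roots_bound[OF \<open>P \<noteq> 0\<close>] dP by simp
qed

lemma counting:
  "card (Fq q - {0::'a}) = q - 1 \<and> (\<forall>r\<in>Fq q - {0::'a}. card {a::'a. a ^ (q+1) = r} = q + 1)"
proof -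
  let ?R = "Fq q - {0::'a}"
  let ?f = "\<lambda>r. card {a::'a. a ^ (q+1) = r}"
  have cR: "card ?R \<le> q - 1" using card_Fq_le Fq_0 by (simp add: card_Diff_singleton)
  have U: "UNIV - {0::'a} = (\<Union>r\<in>?R. {a. a ^ (q+1) = r})"
    using norm_Fq by auto
  have "q^2 - 1 = card (UNIV - {0::'a})" using cq by (simp add: card_Diff_singleton)
  also have "\<dots> \<le> (\<Sum>r\<in>?R. ?f r)" unfolding U by (rule card_UN_le) simp
  finally have A: "q^2 - 1 \<le> (\<Sum>r\<in>?R. ?f r)" .
  have B: "(\<Sum>r\<in>?R. ?f r) \<le> card ?R * (q+1)"
    using sum_bounded_above[of ?R ?f "q+1"] fiber_le by simp
  have qq: "q^2 - 1 = (q - 1) * (q + 1)" using q_ge2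
    by (simp add: power2_eq_square algebra_simps diff_mult_distrib)
  have cR': "card ?R = q - 1"
  proof -
    have "(q - 1) * (q+1) \<le> card ?R * (q+1)" using A B qq by linarith
    hence "q - 1 \<le> card ?R" by (simp only: mult_le_cancel2)
    thus ?thesis using cR by simp
  qed
  moreover have "\<forall>r\<in>?R. ?f r = q + 1"
  proof (rule ccontr)
    assume "\<not> ?thesis"
    then obtain r0 where r0: "r0 \<in> ?R" "?f r0 \<noteq> q + 1" by blast
    hence lt: "?f r0 \<le> q" using fiber_le[of r0] by simp
    have fin: "finite ?R" by simp
    have "(\<Sum>r\<in>?R. ?f r) = ?f r0 + (\<Sum>r\<in>?R - {r0}. ?f r)"
      using r0 fin by (simp add: sum.remove)
    also have "(\<Sum>r\<in>?R - {r0}. ?f r) \<le> card (?R - {r0}) * (q+1)"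
      using sum_bounded_above[of "?R - {r0}" ?f "q+1"] fiber_le by simp
    also have "card (?R - {r0}) = q - 2" using cR' r0 by (simp add: card_Diff_singleton)
    finally have "(\<Sum>r\<in>?R. ?f r) \<le> q + (q-2)*(q+1)" using lt by linarith
    moreover have "q + (q-2)*(q+1) < (q-1)*(q+1)" using q_ge2
      by (cases q; cases "q - 1"; simp add: algebra_simps)
    ultimately show False using A qq by linarith
  qed
  ultimately show ?thesis by blast
qed

lemma card_Fq: "card (Fq q :: 'a set) = q"
proof -
  have "card (Fq q - {0::'a}) = q - 1" using counting by blast
  thus ?thesis using Fq_0 q_ge2 by (simp add: card_Diff_singleton card_gt_0_iff)
qed

lemma fiber_eq: "r \<in> Fq q \<Longrightarrow> r \<noteq> 0 \<Longrightarrow> card {a::'a. a ^ (q+1) = r} = q + 1"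
  using counting by blast

lemma exists_nonFq: "\<exists>\<theta>::'a. \<theta> \<notin> Fq q"
proof (rule ccontr)
  assume "\<not> ?thesis"
  hence "Fq q = (UNIV :: 'a set)" by auto
  hence "q = q^2" using card_Fq cq by simp
  thus False using q_ge2 by (simp add: power2_eq_square)
qed

lemma decomp:
  assumes th: "(\<theta>::'a) \<notin> Fq q"
  shows "\<exists>a b. a \<in> Fq q \<and> b \<in> Fq q \<and> z = a + b * \<theta>"
proof -
  let ?g = "\<lambda>(a,b). a + b * \<theta>"
  have inj: "inj_on ?g (Fq q \<times> Fq q)"
  proof (rule inj_onI, clarsimp)
    fix a b a' b' assume h: "a \<in> Fq q" "b \<in> Fq q" "a' \<in> Fq q" "b' \<in> Fq q" "a + b * \<theta> = a' + b' * \<theta>"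
    show "a = a' \<and> b = b'"
    proof (cases "b = b'")
      case True thus ?thesis using h by simp
    next
      case False
      have "(b - b') * \<theta> = a' - a" using h(5) by (simp add: algebra_simps)
      hence "\<theta> = (a' - a) / (b - b')" using False by (simp add: field_simps)
      hence "\<theta> \<in> Fq q" using h by (simp add: Fq_div Fq_diff)
      thus ?thesis using th by simp
    qed
  qed
  have "card (?g ` (Fq q \<times> Fq q)) = q * q" using card_image[OF inj] card_Fq
    by (simp add: card_cartesian_product)
  hence "?g ` (Fq q \<times> Fq q) = UNIV" using cq
    by (intro card_subset_eq) (auto simp: power2_eq_square)
  hence "z \<in> ?g ` (Fq q \<times> Fq q)" by simp
  thus ?thesis by auto
qed

end

definition ee :: "nat \<Rightarrow> nat \<Rightarrow> nat \<Rightarrow> nat \<Rightarrow> nat" where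
  "ee q s i j = (s - i) + q * (s - j)"

definition W :: "nat \<Rightarrow> nat \<Rightarrow> (nat \<Rightarrow> nat \<Rightarrow> 'a) \<Rightarrow> ('a::{field,finite} \<times> 'a \<Rightarrow> 'a)" where
  "W q s c = (\<lambda>p. \<Sum>i\<le>s. \<Sum>j\<le>s. c i j * ev_mon q s i j p)"

definition Pc :: "nat \<Rightarrow> nat \<Rightarrow> (nat \<Rightarrow> nat \<Rightarrow> 'a) \<Rightarrow> 'a::{field,finite} poly" where
  "Pc q s c = (\<Sum>i\<le>s. \<Sum>j\<le>s. Polynomial.monom (c i j) (ee q s i j))"

lemma B_ext_W: "B_ext q s = range (W q s)"
  unfolding B_ext_def W_def by auto

lemma P1_eq: "(P1 :: ('a::{field,finite} \<times> 'a) set) = range (\<lambda>a. (1, a)) \<union> {(0,1)}"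
  unfolding P1_def by auto

lemma W_aff: "W q s c (1, a) = (\<Sum>i\<le>s. \<Sum>j\<le>s. c i j * a ^ ee q s i j)"
  unfolding W_def ev_mon_def ee_def P1_def by simp

lemma W_out: "p \<notin> P1 \<Longrightarrow> W q s c p = 0"
  unfolding W_def ev_mon_def by simp

lemma W_inf: "q > 0 \<Longrightarrow> W q s c (0, 1) = c 0 0"
proof -
  assume q: "q > 0"
  have "W q s c (0,1) = (\<Sum>i\<le>s. \<Sum>j\<le>s. if i = 0 \<and> j = 0 then c i j else 0)"
    unfolding W_def ev_mon_def P1_def using q
    by (intro sum.cong refl) (auto simp: power_0_left)
  also have "\<dots> = (\<Sum>i\<le>s. if i = 0 then c i 0 else 0)"
    by (intro sum.cong refl) (auto simp: if_distrib)
  also have "\<dots> = c 0 0" by simp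
  finally show ?thesis .
qed

lemma poly_Pc: "poly (Pc q s c) a = W q s c (1, a)"
  unfolding Pc_def W_aff by (simp add: poly_sum poly_monom)

lemma W_lin_diff: "W q s c p - W q s d p = W q s (\<lambda>i j. c i j - d i j) p"
  unfolding W_def by (simp add: sum_subtractf[symmetric] algebra_simps)

lemma W_zero_coeffs: "(\<And>i j. i \<le> s \<Longrightarrow> j \<le> s \<Longrightarrow> c i j = 0) \<Longrightarrow> W q s c p = 0"
  unfolding W_def by simp

context
  fixes q s :: nat
  assumes cq: "card (UNIV :: 'a::{field,finite} set) = q ^ 2"
    and sq: "s \<le> q - 2"
begin

lemma s_lt_q: "s < q" using sq q_ge2[OF cq] by simp

lemma ee_inj: "i \<le> s \<Longrightarrow> j \<le> s \<Longrightarrow> i' \<le> s \<Longrightarrow> j' \<le> s \<Longrightarrow> ee q s i j = ee q s i' j' \<Longrightarrow> i = i' \<and> j = j'"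
proof -
  assume h: "i \<le> s" "j \<le> s" "i' \<le> s" "j' \<le> s" "ee q s i j = ee q s i' j'"
  have q: "q > 0" using s_lt_q by simp
  have l1: "s - i < q" "s - i' < q" using s_lt_q by auto
  have "(s - i + q * (s - j)) mod q = (s - i' + q * (s - j')) mod q" using h(5) by (simp add: ee_def)
  hence "s - i = s - i'" using l1 by simp
  moreover have "(s - i + q * (s - j)) div q = (s - i' + q * (s - j')) div q" using h(5) by (simp add: ee_def)
  hence "s - j = s - j'" using l1 q by simp
  ultimately show ?thesis using h(1-4) by (metis diff_diff_cancel)
qed

lemma ee_le: "ee q s i j \<le> s * (q + 1)"
  unfolding ee_def by (simp add: algebra_simps add_le_mono mult_le_mono)

lemma ee_top: "i \<le> s \<Longrightarrow> j \<le> s \<Longrightarrow> ee q s i j = s * (q + 1) \<Longrightarrow> i = 0 \<and> j = 0"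
  using ee_inj[of i j 0 0] by (simp add: ee_def algebra_simps)

lemma top_lt: "s * (q + 1) < q ^ 2"
proof -
  have "s * (q + 1) \<le> (q - 2) * (q + 1)" using sq by (rule mult_le_mono1)
  also have "\<dots> < q * (q + 1) - q" using q_ge2[OF cq] by (simp add: algebra_simps diff_mult_distrib)
  also have "\<dots> = q ^ 2" by (simp add: power2_eq_square algebra_simps)
  finally show ?thesis .
qed

lemma coeff_Pc: "coeff (Pc q s c) n = (\<Sum>i\<le>s. \<Sum>j\<le>s. if ee q s i j = n then c i j else 0)"
  unfolding Pc_def by (simp add: coeff_sum coeff_monom)

lemma coeff_Pc_ee: "k \<le> s \<Longrightarrow> l \<le> s \<Longrightarrow> coeff (Pc q s c) (ee q s k l) = c k l"
proof -
  assume kl: "k \<le> s" "l \<le> s"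
  have "coeff (Pc q s c) (ee q s k l) = (\<Sum>i\<le>s. \<Sum>j\<le>s. if i = k \<and> j = l then c i j else 0)"
    unfolding coeff_Pc using ee_inj kl by (intro sum.cong refl) auto
  also have "\<dots> = (\<Sum>i\<le>s. if i = k then c i l else 0)"
    using kl by (intro sum.cong refl) (auto simp: if_distrib)
  also have "\<dots> = c k l" using kl by simp
  finally show ?thesis .
qed

lemma degree_Pc: "degree (Pc q s c) \<le> s * (q + 1)"
proof (rule degree_le, intro allI impI)
  fix n assume "s * (q + 1) < n"
  thus "coeff (Pc q s c) n = 0" unfolding coeff_Pc using ee_le
    by (intro sum.neutral ballI) (auto, metis leD)
qed

lemma degree_Pc_lt: "c 0 0 = 0 \<Longrightarrow> Pc q s c \<noteq> 0 \<Longrightarrow> degree (Pc q s c) < s * (q + 1)"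
proof -
  assume c0: "c 0 0 = 0" and nz: "Pc q s c \<noteq> 0"
  have "coeff (Pc q s c) (s * (q + 1)) = 0" unfolding coeff_Pc using ee_top c0
    by (intro sum.neutral ballI) auto
  moreover have "degree (Pc q s c) \<le> s * (q + 1)" by (rule degree_Pc)
  ultimately have "degree (Pc q s c) \<noteq> s * (q + 1)" using nz by (metis leading_coeff_0_iff)
  thus ?thesis using degree_Pc[of c] by simp
qed

lemma K1:
  assumes "\<And>a. W q s c (1, a) = (0::'a)"
  shows "i \<le> s \<Longrightarrow> j \<le> s \<Longrightarrow> c i j = 0"
proof -
  assume ij: "i \<le> s" "j \<le> s"
  have "Pc q s c = 0"
  proof (rule ccontr)
    assume nz: "Pc q s c \<noteq> 0"
    have "{x. poly (Pc q s c) x = 0} = (UNIV :: 'a set)" using assms by (simp add: poly_Pc)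
    hence "q^2 \<le> degree (Pc q s c)" using card_poly_roots_bound[OF nz] cq by simp
    thus False using degree_Pc[of c] top_lt by simp
  qed
  thus "c i j = 0" using coeff_Pc_ee[OF ij, of c] by simp
qed

lemma zeros_le:
  assumes nz: "\<exists>p\<in>P1. W q s c p \<noteq> (0::'a)"
  shows "card {p\<in>P1. W q s c p = 0} \<le> s * (q + 1)"
proof -
  have q: "q > 0" using q_ge2[OF cq] by simp
  have Pnz: "Pc q s c \<noteq> 0"
  proof
    assume "Pc q s c = 0"
    hence "\<And>i j. i \<le> s \<Longrightarrow> j \<le> s \<Longrightarrow> c i j = 0" using coeff_Pc_ee by (metis coeff_0)
    thus False using nz W_zero_coeffs by metis
  qed
  let ?R = "{x. poly (Pc q s c) x = (0::'a)}"
  have sub: "{p\<in>P1. W q s c p = 0} \<subseteq> (\<lambda>a. (1,a)) ` ?R \<union> (if c 0 0 = 0 then {(0,1)} else {})"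
    using W_inf[OF q, of s c] by (auto simp: P1_def poly_Pc)
  have cR: "card ((\<lambda>a. (1::'a,a)) ` ?R) \<le> degree (Pc q s c)"
    using card_image_le[of ?R "\<lambda>a. (1::'a,a)"] card_poly_roots_bound[OF Pnz] by simp
  show ?thesis
  proof (cases "c 0 0 = 0")
    case True
    have "card {p\<in>P1. W q s c p = 0} \<le> card ((\<lambda>a. (1::'a,a)) ` ?R \<union> {(0,1)})"
      using sub True by (intro card_mono) auto
    also have "\<dots> \<le> card ((\<lambda>a. (1::'a,a)) ` ?R) + 1" by (rule order_trans[OF card_Un_le]) simp
    also have "\<dots> \<le> s * (q + 1)" using cR degree_Pc_lt[OF True Pnz] by simp
    finally show ?thesis .
  next
    case False
    have "card {p\<in>P1. W q s c p = 0} \<le> card ((\<lambda>a. (1::'a,a)) ` ?R)"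
      using sub False by (intro card_mono) auto
    also have "\<dots> \<le> s * (q + 1)" using cR degree_Pc[of c] by simp
    finally show ?thesis .
  qed
qed

lemma W_frob: "(W q s c (1, a)) ^ q = W q s (\<lambda>i j. (c j i) ^ q) (1, (a::'a))"
proof -
  have ex: "(a ^ ee q s i j) ^ q = a ^ ee q s j i" for i j
  proof -
    have "(a ^ ee q s i j) ^ q = a ^ (q * (s - i)) * (a ^ (q^2)) ^ (s - j)"
      by (simp add: ee_def power_add power_mult[symmetric] power2_eq_square algebra_simps)
    also have "\<dots> = a ^ ee q s j i" by (simp add: pow_q2[OF cq] ee_def power_add mult.commute)
    finally show ?thesis .
  qed
  have "(W q s c (1, a)) ^ q = (\<Sum>i\<le>s. \<Sum>j\<le>s. (c i j) ^ q * a ^ ee q s j i)"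
    unfolding W_aff by (simp add: frob_sum[OF cq] power_mult_distrib ex)
  also have "\<dots> = (\<Sum>j\<le>s. \<Sum>i\<le>s. (c i j) ^ q * a ^ ee q s j i)" by (rule sum.swap)
  also have "\<dots> = W q s (\<lambda>i j. (c j i) ^ q) (1, a)" unfolding W_aff ..
  finally show ?thesis .
qed

lemma B0_char: "W q s c \<in> (B0_ext q s :: ('a \<times> 'a \<Rightarrow> 'a) set) \<longleftrightarrow> (\<forall>i\<le>s. \<forall>j\<le>s. c i j = (c j i) ^ q)"
proof
  have q: "q > 0" using q_ge2[OF cq] by simp
  assume h: "W q s c \<in> B0_ext q s"
  have "W q s (\<lambda>i j. (c j i) ^ q - c i j) (1, a) = 0" for a
  proof -
    have P: "(1::'a, a) \<in> P1" by (simp add: P1_def)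
    have "W q s c (1, a) \<in> Fq q" using h P unfolding B0_ext_def by blast
    hence e: "(W q s c (1, a)) ^ q = W q s c (1, a)" by (simp add: Fq_def)
    have "W q s (\<lambda>i j. (c j i) ^ q - c i j) (1, a) = W q s (\<lambda>i j. (c j i) ^ q) (1, a) - W q s c (1, a)"
      by (rule W_lin_diff[symmetric])
    also have "\<dots> = 0" using e W_frob[of c a] by simp
    finally show ?thesis .
  qed
  from K1[OF this] show "\<forall>i\<le>s. \<forall>j\<le>s. c i j = (c j i) ^ q" by simp
next
  have q: "q > 0" using q_ge2[OF cq] by simp
  assume h: "\<forall>i\<le>s. \<forall>j\<le>s. c i j = (c j i) ^ q"
  have "W q s c p \<in> Fq q" if "p \<in> P1" for p
  proof -
    { fix a
      have "W q s (\<lambda>i j. (c j i) ^ q) (1, a) = W q s c (1, a)"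
        unfolding W_aff by (intro sum.cong refl) (metis atMost_iff h)
      hence "(W q s c (1, a)) ^ q = W q s c (1, a)" using W_frob[of c a] by simp
      hence "W q s c (1, a) \<in> Fq q" by (simp add: Fq_def) }
    moreover have "W q s c (0, 1) \<in> Fq q"
      using h[rule_format, of 0 0] W_inf[OF q, of s c] unfolding Fq_def by simp
    ultimately show ?thesis using that unfolding P1_def by blast
  qed
  moreover have "W q s c \<in> B_ext q s" unfolding B_ext_W by simp
  ultimately show "W q s c \<in> B0_ext q s" unfolding B0_ext_def by blast
qed

end

lemma W_sum: "W q s (\<lambda>i j. \<Sum>k\<in>K. f k i j) p = (\<Sum>k\<in>K. W q s (f k) p)"
proof -
  have "W q s (\<lambda>i j. \<Sum>k\<in>K. f k i j) p = (\<Sum>i\<le>s. \<Sum>j\<le>s. \<Sum>k\<in>K. f k i j * ev_mon q s i j p)"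
    unfolding W_def by (simp add: sum_distrib_right)
  also have "\<dots> = (\<Sum>i\<le>s. \<Sum>k\<in>K. \<Sum>j\<le>s. f k i j * ev_mon q s i j p)"
    by (intro sum.cong refl) (rule sum.swap)
  also have "\<dots> = (\<Sum>k\<in>K. \<Sum>i\<le>s. \<Sum>j\<le>s. f k i j * ev_mon q s i j p)"
    by (rule sum.swap)
  also have "\<dots> = (\<Sum>k\<in>K. W q s (f k) p)" unfolding W_def ..
  finally show ?thesis .
qed

lemma W_scale: "W q s (\<lambda>i j. a * c i j) p = a * W q s c p"
  unfolding W_def by (simp add: sum_distrib_left mult.assoc)

lemma dm_aux: "l < (m::nat) \<Longrightarrow> (k * m + l) div m = k \<and> (k * m + l) mod m = l"
  by simp

lemma div_bound:
  fixes n s :: nat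
  assumes "n < (s+1)^2"
  shows "n div (s+1) \<le> s" "n mod (s+1) \<le> s"
proof -
  have "n < (s+1) * (s+1)" using assms by (simp only: power2_eq_square)
  hence "n div (s+1) < s + 1" by (rule less_mult_imp_div_less)
  thus "n div (s+1) \<le> s" by simp
  show "n mod (s+1) \<le> s" using mod_less_divisor[of "s+1" n] by simp
qed

lemma reidx:
  fixes s :: nat
  shows "(\<Sum>n<(s+1)^2. f (n div (s+1)) (n mod (s+1))) = (\<Sum>k\<le>s. \<Sum>l\<le>s. f k l)"
proof -
  let ?m = "s + 1"
  have "(\<Sum>k\<le>s. \<Sum>l\<le>s. f k l) = (\<Sum>(k,l)\<in>{..s}\<times>{..s}. f k l)"
    by (simp add: sum.cartesian_product)
  also have "\<dots> = (\<Sum>n<?m^2. f (n div ?m) (n mod ?m))"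
  proof (rule sum.reindex_bij_witness[where j = "\<lambda>(k,l). k * ?m + l" and i = "\<lambda>n. (n div ?m, n mod ?m)"])
    fix a :: nat assume a: "a \<in> {..<?m^2}"
    show "(case (a div ?m, a mod ?m) of (k, l) \<Rightarrow> k * ?m + l) = a" by (simp only: prod.case div_mult_mod_eq)
    show "(a div ?m, a mod ?m) \<in> {..s} \<times> {..s}" using div_bound[of a s] a by auto
  next
    fix b assume b: "b \<in> {..s} \<times> {..s}"
    obtain k l where kl: "b = (k, l)" "k \<le> s" "l \<le> s" using b by auto
    have dm: "(k * ?m + l) div ?m = k \<and> (k * ?m + l) mod ?m = l" using kl by (intro dm_aux) simp
    show "((case b of (k, l) \<Rightarrow> k * ?m + l) div ?m, (case b of (k, l) \<Rightarrow> k * ?m + l) mod ?m) = b"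
      using kl dm by (simp only: prod.case)
    have "k * ?m + l < ?m * ?m"
    proof -
      have "k * ?m + l \<le> s * ?m + s" using kl by (intro add_mono mult_le_mono1) auto
      also have "\<dots> < ?m * ?m" by simp
      finally show ?thesis .
    qed
    thus "(case b of (k, l) \<Rightarrow> k * ?m + l) \<in> {..<?m^2}" using kl by (simp add: power2_eq_square)
    show "f ((case b of (k, l) \<Rightarrow> k * ?m + l) div ?m) ((case b of (k, l) \<Rightarrow> k * ?m + l) mod ?m) = (case b of (k, l) \<Rightarrow> f k l)"
      using kl dm by (simp only: prod.case)
  qed
  finally show ?thesis by simp
qed

definition beta :: "nat \<Rightarrow> 'a::field \<Rightarrow> nat \<Rightarrow> nat \<Rightarrow> nat \<Rightarrow> nat \<Rightarrow> 'a" where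
  "beta q \<theta> k l = (\<lambda>i j. if k \<le> l then (if (i = k \<and> j = l) \<or> (i = l \<and> j = k) then 1 else 0)
      else (if i = l \<and> j = k then \<theta> else if i = k \<and> j = l then \<theta> ^ q else 0))"

definition comb :: "nat \<Rightarrow> nat \<Rightarrow> 'a::field \<Rightarrow> (nat \<Rightarrow> nat \<Rightarrow> 'a) \<Rightarrow> nat \<Rightarrow> nat \<Rightarrow> 'a" where
  "comb q s \<theta> lam = (\<lambda>i j. \<Sum>k\<le>s. \<Sum>l\<le>s. lam k l * beta q \<theta> k l i j)"

lemma comb_eval:
  assumes ij: "i \<le> s" "j \<le> s"
  shows "comb q s \<theta> lam i j = (if i < j then lam i j + lam j i * \<theta>
     else if i = j then lam i i else lam j i + lam i j * \<theta> ^ q)"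
proof -
  let ?g = "\<lambda>(k,l). lam k l * beta q \<theta> k l i j"
  have "comb q s \<theta> lam i j = (\<Sum>(k,l)\<in>{..s}\<times>{..s}. lam k l * beta q \<theta> k l i j)"
    unfolding comb_def by (simp add: sum.cartesian_product)
  also have "\<dots> = (\<Sum>(k,l)\<in>{(i,j),(j,i)}. lam k l * beta q \<theta> k l i j)"
    by (rule sum.mono_neutral_right) (use ij in \<open>auto simp: beta_def split: if_splits\<close>)
  also have "\<dots> = (if i < j then lam i j + lam j i * \<theta>
     else if i = j then lam i i else lam j i + lam i j * \<theta> ^ q)"
    by (cases "i = j") (auto simp: beta_def)
  finally show ?thesis .
qed

lemma W_comb: "(\<Sum>n<(s+1)^2. mu n * W q s (beta q \<theta> (n div (s+1)) (n mod (s+1))) p)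
   = W q s (comb q s \<theta> (\<lambda>k l. mu (k * (s+1) + l))) p"
proof -
  have "(\<Sum>n<(s+1)^2. mu n * W q s (beta q \<theta> (n div (s+1)) (n mod (s+1))) p)
      = (\<Sum>n<(s+1)^2. (\<lambda>k l. mu (k * (s+1) + l) * W q s (beta q \<theta> k l) p) (n div (s+1)) (n mod (s+1)))"
    by (intro sum.cong refl) (simp only: div_mult_mod_eq)
  also have "\<dots> = (\<Sum>k\<le>s. \<Sum>l\<le>s. mu (k * (s+1) + l) * W q s (beta q \<theta> k l) p)"
    by (rule reidx)
  also have "\<dots> = W q s (comb q s \<theta> (\<lambda>k l. mu (k * (s+1) + l))) p"
    unfolding comb_def W_sum W_scale ..
  finally show ?thesis .
qed

context
  fixes q s :: nat
  assumes cq: "card (UNIV :: 'a::{field,finite} set) = q ^ 2"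
    and sq: "s \<le> q - 2"
begin

lemma beta_sym: "beta q (\<theta>::'a) k l i j = (beta q \<theta> k l j i) ^ q"
  using q_ge2[OF cq] pow_qq[OF cq, of \<theta>] by (auto simp: beta_def)

lemma beta_B0: "W q s (beta q (\<theta>::'a) k l) \<in> B0_ext q s"
  using B0_char[OF cq sq] beta_sym by blast

lemma lin_indep_th:
  assumes th: "(\<theta>::'a) \<notin> Fq q" and ab: "a \<in> Fq q" "b \<in> Fq q" and e: "a + b * \<theta> = 0"
  shows "a = 0 \<and> b = 0"
proof (cases "b = 0")
  case True thus ?thesis using e by simp
next
  case False
  have "b * \<theta> = 0 - a" using e by (simp add: algebra_simps eq_neg_iff_add_eq_0)
  hence "\<theta> = (0 - a) / b" using False by (simp add: field_simps)
  moreover have "(0 - a) / b \<in> Fq q" using ab Fq_0[OF cq] Fq_div[OF cq] Fq_diff[OF cq] by blast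
  ultimately have "\<theta> \<in> Fq q" by simp
  thus ?thesis using th by simp
qed

lemma lin_indep_thq:
  assumes th: "(\<theta>::'a) \<notin> Fq q" and ab: "a \<in> Fq q" "b \<in> Fq q" and e: "a + b * \<theta> ^ q = 0"
  shows "a = 0 \<and> b = 0"
proof -
  have th': "\<theta> ^ q \<notin> Fq q"
  proof
    assume "\<theta> ^ q \<in> Fq q"
    hence "(\<theta> ^ q) ^ q = \<theta> ^ q" by (simp add: Fq_def)
    hence "\<theta> = \<theta> ^ q" using pow_qq[OF cq] by simp
    thus False using th by (simp add: Fq_def)
  qed
  show ?thesis using lin_indep_th[OF th' ab e] .
qed

definition vs :: "'a \<Rightarrow> ('a \<times> 'a \<Rightarrow> 'a) list" where
  "vs \<theta> = map (\<lambda>n. W q s (beta q \<theta> (n div (s+1)) (n mod (s+1)))) [0..<(s+1)^2]"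

lemma vs_nth: "n < (s+1)^2 \<Longrightarrow> vs \<theta> ! n = W q s (beta q \<theta> (n div (s+1)) (n mod (s+1)))"
  unfolding vs_def by simp

lemma vs_len: "length (vs \<theta>) = (s+1)^2" unfolding vs_def by simp

lemma span_vs: "(\<lambda>p. \<Sum>n<length (vs \<theta>). mu n * (vs \<theta> ! n) p)
    = W q s (comb q s \<theta> (\<lambda>k l. mu (k * (s+1) + l)))"
proof
  fix p
  have "(\<Sum>n<length (vs \<theta>). mu n * (vs \<theta> ! n) p)
     = (\<Sum>n<(s+1)^2. mu n * W q s (beta q \<theta> (n div (s+1)) (n mod (s+1))) p)"
    unfolding vs_len by (intro sum.cong refl) (simp add: vs_nth)
  thus "(\<Sum>n<length (vs \<theta>). mu n * (vs \<theta> ! n) p) = W q s (comb q s \<theta> (\<lambda>k l. mu (k * (s+1) + l))) p"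
    using W_comb by simp
qed

lemma dim_B0:
  assumes th: "(\<theta>::'a) \<notin> Fq q"
  shows "has_Fq_dim q (B0_ext q s :: ('a \<times> 'a \<Rightarrow> 'a) set) ((s + 1) ^ 2)"
  unfolding has_Fq_dim_def
proof (intro exI[of _ "vs \<theta>"] conjI)
  show "length (vs \<theta>) = (s+1)^2" by (rule vs_len)
  show "set (vs \<theta>) \<subseteq> B0_ext q s" unfolding vs_def using beta_B0 by auto
  show "Fq_indep q (vs \<theta>)"
    unfolding Fq_indep_def
  proof (intro allI impI)
    fix mu :: "nat \<Rightarrow> 'a" and n
    assume h: "(\<forall>i. mu i \<in> Fq q) \<and> (\<forall>p. (\<Sum>i<length (vs \<theta>). mu i * (vs \<theta> ! i) p) = 0)"
    assume n: "n < length (vs \<theta>)"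
    let ?lam = "\<lambda>k l. mu (k * (s+1) + l)"
    have z: "W q s (comb q s \<theta> ?lam) p = 0" for p
      using fun_cong[OF span_vs[of mu \<theta>], of p] h by simp
    have c0: "comb q s \<theta> ?lam i j = 0" if "i \<le> s" "j \<le> s" for i j
      using K1[OF cq sq, of "comb q s \<theta> ?lam", OF z] that by blast
    define k l where "k = n div (s+1)" and "l = n mod (s+1)"
    have kl: "k \<le> s" "l \<le> s" using n div_bound[of n s] unfolding vs_len k_def l_def by auto
    have mun: "mu n = ?lam k l" unfolding k_def l_def by (simp only: div_mult_mod_eq)
    have F: "?lam a b \<in> Fq q" for a b using h by blast
    show "mu n = 0"
    proof (cases k l rule: linorder_cases)
      case less
      have "?lam k l + ?lam l k * \<theta> = 0" using c0[OF kl] comb_eval[OF kl, of q \<theta> ?lam] less by simp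
      thus ?thesis using lin_indep_th[OF th F[of k l] F[of l k]] mun by simp
    next
      case equal
      thus ?thesis using c0[OF kl] comb_eval[OF kl, of q \<theta> ?lam] mun by simp
    next
      case greater
      have "?lam l k + ?lam k l * \<theta> = 0" using c0[OF kl(2,1)] comb_eval[OF kl(2,1), of q \<theta> ?lam] greater by simp
      thus ?thesis using lin_indep_th[OF th F[of l k] F[of k l]] mun by simp
    qed
  qed
  show "Fq_span q (vs \<theta>) = B0_ext q s"
  proof
    show "Fq_span q (vs \<theta>) \<subseteq> B0_ext q s"
    proof
      fix w assume "w \<in> Fq_span q (vs \<theta>)"
      then obtain mu where mu: "\<forall>i. mu i \<in> Fq q" and w: "w = (\<lambda>p. \<Sum>n<length (vs \<theta>). mu n * (vs \<theta> ! n) p)"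
        unfolding Fq_span_def by blast
      have "w \<in> B_ext q s" unfolding w span_vs B_ext_W by simp
      moreover have "w p \<in> Fq q" if "p \<in> P1" for p
      proof -
        have "(vs \<theta> ! n) p \<in> Fq q" if "n < length (vs \<theta>)" for n
          using that \<open>p \<in> P1\<close> beta_B0 unfolding vs_len by (auto simp: vs_nth B0_ext_def)
        thus ?thesis unfolding w using mu by (auto intro!: Fq_sum[OF cq] Fq_mult[OF cq])
      qed
      ultimately show "w \<in> B0_ext q s" unfolding B0_ext_def by blast
    qed
  next
    show "B0_ext q s \<subseteq> Fq_span q (vs \<theta>)"
    proof
      fix w :: "'a \<times> 'a \<Rightarrow> 'a" assume wB: "w \<in> B0_ext q s"
      have "w \<in> B_ext q s" using wB unfolding B0_ext_def by (rule IntD1)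
      then obtain c where wc: "w = W q s c" unfolding B_ext_W by (rule rangeE)
      have "W q s c \<in> B0_ext q s" using wB wc by simp
      hence sym: "\<forall>i\<le>s. \<forall>j\<le>s. c i j = (c j i) ^ q" by (rule iffD1[OF B0_char[OF cq sq]])
      define dec where "dec z = (SOME ab. fst ab \<in> Fq q \<and> snd ab \<in> Fq q \<and> z = fst ab + snd ab * \<theta>)" for z
      have dec: "fst (dec z) \<in> Fq q \<and> snd (dec z) \<in> Fq q \<and> z = fst (dec z) + snd (dec z) * \<theta>" for z
      proof -
        obtain a b where "a \<in> Fq q" "b \<in> Fq q" "z = a + b * \<theta>" using decomp[OF cq th] by blast
        hence "\<exists>ab. fst ab \<in> Fq q \<and> snd ab \<in> Fq q \<and> z = fst ab + snd ab * \<theta>" by (intro exI[of _ "(a,b)"]) simp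
        thus ?thesis unfolding dec_def by (rule someI_ex)
      qed
      have decs: "fst (dec z) + snd (dec z) * \<theta> = z" "fst (dec z) \<in> Fq q" "snd (dec z) \<in> Fq q" for z
        using dec[of z] by auto
      define lam where "lam k l = (if k < l then fst (dec (c k l)) else if k = l then c k k else snd (dec (c l k)))" for k l
      define mu where "mu n = (if n < (s+1)^2 then lam (n div (s+1)) (n mod (s+1)) else 0)" for n
      have lamF: "lam k l \<in> Fq q" if kl: "k \<le> s" "l \<le> s" for k l
      proof -
        have "c k k = (c k k) ^ q" using sym kl by blast
        hence "c k k \<in> Fq q" unfolding Fq_def by simp
        thus ?thesis unfolding lam_def using decs(2,3) by auto
      qed
      have muF: "mu n \<in> Fq q" for n
      proof (cases "n < (s+1)^2")
        case True
        hence "n div (s+1) \<le> s" "n mod (s+1) \<le> s" using div_bound by auto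
        thus ?thesis using True lamF unfolding mu_def by simp
      next
        case False thus ?thesis unfolding mu_def using Fq_0[OF cq] by simp
      qed
      have mu_lam: "mu (k * (s+1) + l) = lam k l" if "k \<le> s" "l \<le> s" for k l
      proof -
        have "k * (s+1) + l \<le> s * (s+1) + s" using that by (intro add_mono mult_le_mono1) auto
        hence "k * (s+1) + l < (s+1)^2" by (simp add: power2_eq_square)
        moreover have "(k * (s+1) + l) div (s+1) = k \<and> (k * (s+1) + l) mod (s+1) = l"
          using that by (intro dm_aux) simp
        ultimately show ?thesis unfolding mu_def by simp
      qed
      have "comb q s \<theta> (\<lambda>k l. mu (k * (s+1) + l)) i j = c i j" if ij: "i \<le> s" "j \<le> s" for i j
      proof (cases i j rule: linorder_cases)
        case less
        have "comb q s \<theta> (\<lambda>k l. mu (k * (s+1) + l)) i j = mu (i * (s+1) + j) + mu (j * (s+1) + i) * \<theta>"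
          using comb_eval[OF ij, of q \<theta> "\<lambda>k l. mu (k * (s+1) + l)"] less by simp
        also have "\<dots> = lam i j + lam j i * \<theta>" using mu_lam[OF ij] mu_lam[OF ij(2,1)] by simp
        also have "\<dots> = c i j" using less decs(1)[of "c i j"] by (simp add: lam_def)
        finally show ?thesis .
      next
        case equal
        have "comb q s \<theta> (\<lambda>k l. mu (k * (s+1) + l)) i j = mu (i * (s+1) + i)"
          using comb_eval[OF ij, of q \<theta> "\<lambda>k l. mu (k * (s+1) + l)"] equal by simp
        also have "\<dots> = c i j" using mu_lam[OF ij(1) ij(1)] equal by (simp add: lam_def)
        finally show ?thesis .
      next
        case greater
        define a b where "a = fst (dec (c j i))" and "b = snd (dec (c j i))"
        have ab: "a + b * \<theta> = c j i" "a ^ q = a" "b ^ q = b" using decs[of "c j i"] unfolding a_def b_def Fq_def by auto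
        have "c i j = (c j i) ^ q" using sym ij by blast
        also have "\<dots> = (a + b * \<theta>) ^ q" using ab(1) by simp
        also have "\<dots> = a + b * \<theta> ^ q" using ab(2,3)
          by (simp add: frob_add[OF cq] power_mult_distrib)
        finally have "c i j = a + b * \<theta> ^ q" .
        moreover have "comb q s \<theta> (\<lambda>k l. mu (k * (s+1) + l)) i j = a + b * \<theta> ^ q"
        proof -
          have "comb q s \<theta> (\<lambda>k l. mu (k * (s+1) + l)) i j = mu (j * (s+1) + i) + mu (i * (s+1) + j) * \<theta> ^ q"
            using comb_eval[OF ij, of q \<theta> "\<lambda>k l. mu (k * (s+1) + l)"] greater by simp
          also have "\<dots> = lam j i + lam i j * \<theta> ^ q" using mu_lam[OF ij] mu_lam[OF ij(2,1)] by simp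
          also have "\<dots> = a + b * \<theta> ^ q" using greater by (simp add: lam_def a_def b_def)
          finally show ?thesis .
        qed
        ultimately show ?thesis by simp
      qed
      hence "w = W q s (comb q s \<theta> (\<lambda>k l. mu (k * (s+1) + l)))"
        unfolding wc W_def by (intro ext sum.cong refl) auto
      hence "w = (\<lambda>p. \<Sum>n<length (vs \<theta>). mu n * (vs \<theta> ! n) p)" using span_vs by simp
      thus "w \<in> Fq_span q (vs \<theta>)" unfolding Fq_span_def using muF by blast
    qed
  qed
qed

end

context
  fixes q s :: nat
  assumes cq: "card (UNIV :: 'a::{field,finite} set) = q ^ 2"
    and sq: "s \<le> q - 2"
begin

lemma card_P1: "card (P1 :: ('a \<times> 'a) set) = q ^ 2 + 1"
proof -
  have e: "(P1 :: ('a \<times> 'a) set) = insert (0,1) (range (Pair 1))" unfolding P1_def by auto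
  have "card (range (Pair (1::'a)) :: ('a \<times> 'a) set) = card (UNIV :: 'a set)"
    by (rule card_image) (auto simp: inj_on_def)
  thus ?thesis unfolding e using cq by (subst card_insert_disjoint) auto
qed

lemma hdist_lb:
  assumes x: "x \<in> (B0_ext q s :: ('a \<times> 'a \<Rightarrow> 'a) set)" and y: "y \<in> B0_ext q s" and xy: "x \<noteq> y"
  shows "q ^ 2 + 1 - s * (q + 1) \<le> hdist x y"
proof -
  obtain c1 where c1: "x = W q s c1" using x unfolding B0_ext_def B_ext_W by blast
  obtain c2 where c2: "y = W q s c2" using y unfolding B0_ext_def B_ext_W by blast
  define d where "d = (\<lambda>i j. c1 i j - c2 i j)"
  have xyd: "x p - y p = W q s d p" for p unfolding c1 c2 d_def by (rule W_lin_diff)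
  obtain p0 where p0: "x p0 \<noteq> y p0" using xy by blast
  have "p0 \<in> P1"
  proof (rule ccontr)
    assume "p0 \<notin> P1"
    hence "x p0 = 0" "y p0 = 0" unfolding c1 c2 by (simp_all add: W_out)
    thus False using p0 by simp
  qed
  moreover have "W q s d p0 \<noteq> 0" using xyd[of p0, symmetric] p0 by simp
  ultimately have nz: "\<exists>p\<in>P1. W q s d p \<noteq> 0" by blast
  have iff: "(x p = y p) = (W q s d p = 0)" for p by (simp add: xyd[symmetric])
  let ?Z = "{p\<in>P1. W q s d p = (0::'a)}"
  have Z: "card ?Z \<le> s * (q + 1)" by (rule zeros_le[OF cq sq nz])
  have "{p \<in> P1. x p \<noteq> y p} = P1 - ?Z" using iff by blast
  hence "hdist x y = card (P1 :: ('a \<times> 'a) set) - card ?Z" unfolding hdist_def by (simp add: card_Diff_subset)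
  thus ?thesis using Z card_P1 by simp
qed

lemma achieve:
  "\<exists>x y. x \<in> (B0_ext q s :: ('a \<times> 'a \<Rightarrow> 'a) set) \<and> y \<in> B0_ext q s \<and> x \<noteq> y
     \<and> hdist x y = q ^ 2 + 1 - s * (q + 1)"
proof -
  have q0: "q > 0" using q_ge2[OF cq] by simp
  have "s \<le> card (Fq q - {0::'a})" using counting[OF cq] sq by simp
  then obtain T where T: "T \<subseteq> Fq q - {0::'a}" "card T = s" "finite T"
    by (rule obtain_subset_with_card_n)
  define R :: "'a poly" where "R = (\<Prod>r\<in>T. [:-r, 1:])"
  have degR: "degree R = s" unfolding R_def using T
    by (subst degree_prod_eq_sum_degree) auto
  have lcR: "coeff R s = 1" using lead_coeff_prod[of "\<lambda>r. [:-r, 1:]" T] degR unfolding R_def by simp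
  have polyR: "poly R z = (\<Prod>r\<in>T. z - r)" for z unfolding R_def by (simp add: poly_prod)
  define c where "c i j = (if j = i then coeff R (s - i) else 0)" for i j
  let ?x = "W q s c"
  have xa: "?x (1, a) = (\<Prod>r\<in>T. a ^ (q+1) - r)" for a
  proof -
    have "?x (1, a) = (\<Sum>i\<le>s. \<Sum>j\<le>s. c i j * a ^ ee q s i j)" by (rule W_aff)
    also have "\<dots> = (\<Sum>i\<le>s. coeff R (s - i) * (a ^ (q+1)) ^ (s - i))"
    proof (intro sum.cong refl)
      fix i assume i: "i \<in> {..s}"
      have "(\<Sum>j\<le>s. c i j * a ^ ee q s i j) = (\<Sum>j\<le>s. if j = i then coeff R (s - i) * a ^ ee q s i i else 0)"
        unfolding c_def by (intro sum.cong refl) auto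
      also have "\<dots> = coeff R (s - i) * a ^ ee q s i i" using i by simp
      also have "a ^ ee q s i i = (a ^ (q+1)) ^ (s - i)"
      proof -
        have "ee q s i i = (q+1) * (s - i)" by (simp add: ee_def)
        thus ?thesis by (simp only: power_mult)
      qed
      finally show "(\<Sum>j\<le>s. c i j * a ^ ee q s i j) = coeff R (s - i) * (a ^ (q+1)) ^ (s - i)" .
    qed
    also have "\<dots> = (\<Sum>m\<le>s. coeff R m * (a ^ (q+1)) ^ m)"
      using sum.atLeastAtMost_rev[of "\<lambda>m. coeff R m * (a ^ (q+1)) ^ m" 0 s]
      by (simp add: atMost_atLeast0)
    also have "\<dots> = poly R (a ^ (q+1))" by (simp add: poly_altdef degR)
    finally show ?thesis by (simp add: polyR)
  qed
  have xinf: "?x (0, 1) = 1" using W_inf[OF q0, of s c] lcR by (simp add: c_def)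
  have xB: "?x \<in> B0_ext q s"
  proof -
    have "?x p \<in> Fq q" if "p \<in> P1" for p
    proof -
      have "?x (1, a) \<in> Fq q" for a
        unfolding xa using T by (intro Fq_prod[OF cq] Fq_diff[OF cq] norm_Fq[OF cq]) auto
      moreover have "?x (0, 1) \<in> Fq q" using xinf Fq_1[OF cq] by simp
      ultimately show ?thesis using that unfolding P1_def by blast
    qed
    moreover have "?x \<in> B_ext q s" unfolding B_ext_W by simp
    ultimately show ?thesis unfolding B0_ext_def by blast
  qed
  let ?y = "W q s (\<lambda>_ _. 0::'a)"
  have y0: "?y p = 0" for p by (rule W_zero_coeffs) simp
  have yB: "?y \<in> B0_ext q s" using B0_char[OF cq sq, of "\<lambda>_ _. 0"] q0 by simp
  have xy: "?x \<noteq> ?y" using xinf y0[of "(0,1)"] by auto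
  let ?Z = "{p \<in> P1. ?x p = 0}"
  have Zeq: "?Z = Pair 1 ` {a. a ^ (q+1) \<in> T}"
  proof
    show "?Z \<subseteq> Pair 1 ` {a. a ^ (q+1) \<in> T}"
    proof
      fix p assume p: "p \<in> ?Z"
      then obtain a where "p = (1, a)" using xinf unfolding P1_def by auto
      moreover have "?x (1, a) = 0" using p calculation by simp
      hence "a ^ (q+1) \<in> T" unfolding xa using T(3) by (auto simp: prod_zero_iff)
      ultimately show "p \<in> Pair 1 ` {a. a ^ (q+1) \<in> T}" by auto
    qed
    show "Pair 1 ` {a. a ^ (q+1) \<in> T} \<subseteq> ?Z"
      using T(3) by (auto simp: xa prod_zero_iff P1_def)
  qed
  have "card ?Z = card {a::'a. a ^ (q+1) \<in> T}" unfolding Zeq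
    by (rule card_image) (auto simp: inj_on_def)
  also have "{a::'a. a ^ (q+1) \<in> T} = (\<Union>r\<in>T. {a. a ^ (q+1) = r})" by auto
  also have "card \<dots> = (\<Sum>r\<in>T. card {a::'a. a ^ (q+1) = r})"
    using T(3) by (intro card_UN_disjoint) auto
  also have "\<dots> = (\<Sum>r\<in>T. q + 1)" using T(1) fiber_eq[OF cq] by (intro sum.cong refl) auto
  also have "\<dots> = s * (q + 1)" using T(2) by simp
  finally have cZ: "card ?Z = s * (q + 1)" .
  have "{p \<in> P1. ?x p \<noteq> ?y p} = P1 - ?Z" using y0 by auto
  hence "hdist ?x ?y = card (P1 :: ('a \<times> 'a) set) - card ?Z" unfolding hdist_def by (simp add: card_Diff_subset)
  hence "hdist ?x ?y = q ^ 2 + 1 - s * (q + 1)" using cZ card_P1 by simp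
  thus ?thesis using xB yB xy by blast
qed

lemma min_dist_B0: "min_dist (B0_ext q s :: ('a \<times> 'a \<Rightarrow> 'a) set) = q ^ 2 + 1 - s * (q + 1)"
  unfolding min_dist_def
proof (rule Min_eqI)
  let ?S = "{hdist x y |x y. x \<in> (B0_ext q s :: ('a \<times> 'a \<Rightarrow> 'a) set) \<and> y \<in> B0_ext q s \<and> x \<noteq> y}"
  have "?S \<subseteq> {..card (P1 :: ('a \<times> 'a) set)}"
    unfolding hdist_def by (auto intro!: card_mono)
  thus "finite ?S" by (rule finite_subset) simp
  show "\<And>d. d \<in> ?S \<Longrightarrow> q ^ 2 + 1 - s * (q + 1) \<le> d" using hdist_lb by blast
  show "q ^ 2 + 1 - s * (q + 1) \<in> ?S" using achieve by force
qed

end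

theorem proposition3p3:
  fixes q s :: nat
  assumes "card (UNIV :: ('a::{field,finite}) set) = q ^ 2"
    and "s \<le> q - 2"
  shows "card (P1 :: ('a \<times> 'a) set) = q ^ 2 + 1
    \<and> has_Fq_dim q (B0_ext q s :: ('a \<times> 'a \<Rightarrow> 'a) set) ((s + 1) ^ 2)
    \<and> min_dist (B0_ext q s :: ('a \<times> 'a \<Rightarrow> 'a) set) = q ^ 2 + 1 - s * (q + 1)"
proof -
  obtain \<theta> :: 'a where th: "\<theta> \<notin> Fq q" using exists_nonFq[OF assms(1)] by blast
  show ?thesis using card_P1[OF assms] dim_B0[OF assms th] min_dist_B0[OF assms] by blast
qed

end
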